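(* Let $(G,C,s,t)$ be an input to $\mathrm{DACC}$ with $n=|V(G)|$ and $m=|E(G)|$, and let $\mu(C)$ denote the number of maximal independent sets of $C$. The algorithm that enumerates the maximal independent sets $I$ of $C$ using an output-sensitive enumeration procedure with delay $M(m)$ (where $M(k)=\mathcal{O}(k^{2.372})$ is the time to multiply two $k\times k$ matrices), and for each $I$ runs breadth-first search to test whether the digraph $(V(G),I)$ contains a directed $s$–$t$ path (returning True as soon as one is found, and False otherwise), runs in time \[\mathcal{O}(n+m)\cdot M(m)\cdot \mu(C)\;\le\;\mathcal{O}(n^{6.75})\cdot\mu(C)\;\le\;\mathcal{O}(1.45^{n^2}).\]
   Context: Let $\Gamma=(V,E)$ be a directed acyclic graph. A constraint graph for $\Gamma$ is a simple undirected graph $C=(E,E')$ whose vertex set is the edge set of $\Gamma$; an edge $e_1e_2\in E'$ represents the constraint that the edges $e_1$ and $e_2$ cannot both be present. A subgraph $\Gamma'\subseteq\Gamma$ is valid if its edge set is an independent set in $C$. The problem $\mathrm{DACC}$ takes as input a directed acyclic graph $\Gamma$, a constraint graph $C$ for $\Gamma$, and vertices $s,t$, and asks whether some valid subgraph of $\Gamma$ contains a directed path from $s$ to $t$. An output-sensitive enumeration algorithm with delay $d$ for a set $S$ lists all elements of $S$ in total time at most $d|S|$. *)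

theory Defs
  imports Main "HOL-Library.Landau_Symbols"
begin

definition is_dag :: "'v set \<Rightarrow> ('v \<times> 'v) set \<Rightarrow> bool" where
  "is_dag V E \<longleftrightarrow> finite V \<and> E \<subseteq> V \<times> V \<and> acyclic E"

definition constraint_graph :: "('v \<times> 'v) set \<Rightarrow> (('v \<times> 'v) \<times> ('v \<times> 'v)) set \<Rightarrow> bool" where
  "constraint_graph E C \<longleftrightarrow> C \<subseteq> E \<times> E \<and> sym C \<and> irrefl C"

definition indep_set :: "('e \<times> 'e) set \<Rightarrow> 'e set \<Rightarrow> 'e set \<Rightarrow> bool" where
  "indep_set C X I \<longleftrightarrow> I \<subseteq> X \<and> (\<forall>a\<in>I. \<forall>b\<in>I. (a, b) \<notin> C)"

definition maximal_indep_set :: "('e \<times> 'e) set \<Rightarrow> 'e set \<Rightarrow> 'e set \<Rightarrow> bool" where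
  "maximal_indep_set C X I \<longleftrightarrow> indep_set C X I \<and> (\<forall>J. indep_set C X J \<and> I \<subseteq> J \<longrightarrow> J = I)"

definition mu :: "('e \<times> 'e) set \<Rightarrow> 'e set \<Rightarrow> nat" where
  "mu C X = card {I. maximal_indep_set C X I}"

definition dacc :: "'v set \<Rightarrow> ('v \<times> 'v) set \<Rightarrow> (('v \<times> 'v) \<times> ('v \<times> 'v)) set \<Rightarrow> 'v \<Rightarrow> 'v \<Rightarrow> bool" where
  "dacc V E C s t \<longleftrightarrow> (\<exists>E' \<subseteq> E. indep_set C E E' \<and> (s, t) \<in> E'\<^sup>*)"

text \<open>An output-sensitive enumeration of S with delay d: a duplicate-free listing of S,
  each output x paired with the (nonnegative) time spent producing it, total time at most d*|S|.\<close>
definition output_sensitive_enum :: "'a set \<Rightarrow> real \<Rightarrow> ('a \<times> real) list \<Rightarrow> bool" where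
  "output_sensitive_enum S d L \<longleftrightarrow>
     distinct (map fst L) \<and> set (map fst L) = S \<and> (\<forall>x\<in>set L. 0 \<le> snd x) \<and>
     sum_list (map snd L) \<le> d * real (length L)"

fun alg_run :: "'v \<Rightarrow> 'v \<Rightarrow> (('v \<times> 'v) set \<times> real) list \<Rightarrow> bool" where
  "alg_run s t [] = False"
| "alg_run s t ((I, d) # rest) = ((s, t) \<in> I\<^sup>* \<or> alg_run s t rest)"

text \<open>Running time: enumeration time of each processed output plus the BFS cost
  bfs n |I| on the digraph (V, I) with n = |V|.\<close>
fun alg_time :: "(nat \<Rightarrow> nat \<Rightarrow> real) \<Rightarrow> nat \<Rightarrow> 'v \<Rightarrow> 'v \<Rightarrow> (('v \<times> 'v) set \<times> real) list \<Rightarrow> real" where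
  "alg_time bfs n s t [] = 0"
| "alg_time bfs n s t ((I, d) # rest) =
     d + bfs n (card I) + (if (s, t) \<in> I\<^sup>* then 0 else alg_time bfs n s t rest)"

end

theory Submission
  imports Defs Complex_Main
begin

lemma M_bound_lemma:
  fixes M :: "nat \<Rightarrow> real"
  assumes "M \<in> O(\<lambda>k. real k powr 2.372)"
  shows "\<exists>C>0. \<forall>k. M k \<le> C * max 1 (real k powr 2.372)"
proof -
  from assms obtain c where c: "c > 0" and ev: "eventually (\<lambda>k. norm (M k) \<le> c * norm (real k powr 2.372)) at_top"
    unfolding bigo_def by auto
  then obtain N where N: "\<forall>k\<ge>N. norm (M k) \<le> c * norm (real k powr 2.372)"
    unfolding eventually_at_top_linorder by auto
  define B where "B = Max (insert 0 (M ` {..<N}))"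
  have B: "M k \<le> B" if "k < N" for k unfolding B_def using that by (intro Max_ge) auto
  have B0: "0 \<le> B" unfolding B_def by (intro Max_ge) auto
  show ?thesis
  proof (intro exI[of _ "B + c"] conjI allI)
    show "0 < B + c" using B0 c by simp
    fix k
    show "M k \<le> (B + c) * max 1 (real k powr 2.372)"
    proof (cases "k < N")
      case True
      have "M k \<le> B" using B True by simp
      also have "\<dots> \<le> (B + c) * 1" using c by simp
      also have "\<dots> \<le> (B + c) * max 1 (real k powr 2.372)"
        using B0 c by (intro mult_left_mono) auto
      finally show ?thesis .
    next
      case False
      then have "\<bar>M k\<bar> \<le> c * (real k powr 2.372)" using N by auto
      then have "M k \<le> c * (real k powr 2.372)" by linarith
      also have "\<dots> \<le> (B + c) * max 1 (real k powr 2.372)"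
        using B0 c by (intro mult_mono) auto
      finally show ?thesis .
    qed
  qed
qed

lemma poly_geom_bound:
  fixes q :: real
  assumes q0: "0 < q" and q1: "q < 1"
  shows "\<exists>B. \<forall>n::nat. real n ^ 7 * q ^ (n^2) \<le> B"
proof -
  define f where "f n = real n ^ 7 * q ^ (n^2)" for n :: nat
  obtain N where N: "q ^ N < 1 / 128" using real_arch_pow_inv[of "1/128" q] q1 by auto
  have f0: "0 \<le> f n" for n unfolding f_def using q0 by simp
  have big: "f n \<le> 1" if "N \<le> n" for n
  proof -
    have "real n < real (2 ^ n)" using less_exp[of n] by (simp only: of_nat_less_iff)
    then have "real n < 2 ^ n" by simp
    then have "real n ^ 7 \<le> (2 ^ n) ^ 7" by (intro power_mono) auto
    also have "\<dots> = 2 ^ (n * 7)" by (rule power_mult[symmetric])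
    also have "\<dots> = (2 ^ 7) ^ n" by (subst mult.commute) (rule power_mult)
    also have "\<dots> = 128 ^ n" by simp
    finally have a: "real n ^ 7 \<le> 128 ^ n" .
    have qn: "q ^ n \<le> q ^ N" using that q0 q1 by (intro power_decreasing) auto
    have b: "q ^ (n^2) = (q ^ n) ^ n" by (simp add: power2_eq_square power_mult)
    have "f n \<le> 128 ^ n * (q ^ n) ^ n" unfolding f_def b using a q0 by (intro mult_right_mono) auto
    also have "\<dots> = (128 * q ^ n) ^ n" by (simp add: power_mult_distrib)
    also have "\<dots> \<le> 1" using qn N q0 by (intro power_le_one) auto
    finally show ?thesis .
  qed
  show ?thesis
  proof (intro exI[of _ "1 + (\<Sum>k<N. f k)"] allI)
    fix n :: nat
    show "real n ^ 7 * q ^ (n^2) \<le> 1 + (\<Sum>k<N. f k)"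
    proof (cases "n < N")
      case True
      then have "f n \<le> (\<Sum>k<N. f k)" using f0 by (intro member_le_sum) auto
      then show ?thesis unfolding f_def by simp
    next
      case False
      then have "f n \<le> 1" using big by auto
      moreover have "0 \<le> (\<Sum>k<N. f k)" using f0 by (intro sum_nonneg) auto
      ultimately show ?thesis unfolding f_def by simp
    qed
  qed
qed

lemma growth_lemma: "\<exists>K. \<forall>n::nat. real n powr 6.75 * sqrt 2 ^ (n^2) \<le> K * 1.45^(n^2)"
proof -
  define q :: real where "q = sqrt 2 / 1.45"
  have "sqrt 2 < (1.45::real)"
    by (rule real_less_lsqrt) (auto simp: power2_eq_square)
  then have q0: "0 < q" and q1: "q < 1" unfolding q_def by auto
  obtain B where B: "\<forall>n::nat. real n ^ 7 * q ^ (n^2) \<le> B" using poly_geom_bound[OF q0 q1] by blast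
  show ?thesis
  proof (intro exI[of _ B] allI)
    fix n :: nat
    have p: "real n powr 6.75 \<le> real n ^ 7"
    proof (cases "n = 0")
      case True then show ?thesis by simp
    next
      case False
      then have "1 \<le> real n" by simp
      then have "real n powr 6.75 \<le> real n powr 7" by (intro powr_mono) auto
      also have "\<dots> = real n ^ 7" using False by (simp add: powr_realpow)
      finally show ?thesis .
    qed
    have s: "sqrt 2 ^ (n^2) = q ^ (n^2) * 1.45 ^ (n^2)"
      unfolding q_def by (simp add: power_divide)
    have "real n powr 6.75 * sqrt 2 ^ (n^2) \<le> real n ^ 7 * sqrt 2 ^ (n^2)"
      using p by (intro mult_right_mono) auto
    also have "\<dots> = (real n ^ 7 * q ^ (n^2)) * 1.45 ^ (n^2)" unfolding s by simp
    also have "\<dots> \<le> B * 1.45 ^ (n^2)" using B by (intro mult_right_mono) auto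
    finally show "real n powr 6.75 * sqrt 2 ^ (n^2) \<le> B * 1.45^(n^2)" .
  qed
qed

lemma alg_run_iff: "alg_run s t L \<longleftrightarrow> (\<exists>x\<in>set L. (s,t) \<in> (fst x)\<^sup>*)"
  by (induction s t L rule: alg_run.induct) auto

lemma alg_time_le:
  assumes "\<forall>x\<in>set L. 0 \<le> snd x" "\<forall>x\<in>set L. bfs n (card (fst x)) \<le> B" "0 \<le> B"
  shows "alg_time bfs n s t L \<le> sum_list (map snd L) + real (length L) * B"
  using assms
proof (induction bfs n s t L rule: alg_time.induct)
  case (1 bfs n s t)
  then show ?case by simp
next
  case (2 bfs n s t I d rest)
  have s0: "0 \<le> sum_list (map snd rest)" using 2(2) by (intro sum_list_nonneg) auto
  have l0: "0 \<le> real (length rest) * B" using 2(4) by simp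
  have bB: "bfs n (card I) \<le> B" using 2(3) by auto
  show ?case
  proof (cases "(s,t) \<in> I\<^sup>*")
    case True
    then show ?thesis using s0 l0 bB by (simp add: algebra_simps)
  next
    case False
    have IH: "alg_time bfs n s t rest \<le> sum_list (map snd rest) + real (length rest) * B"
      using 2 False by auto
    then show ?thesis using False bB by (simp add: algebra_simps)
  qed
qed

lemma extend_maximal:
  assumes "finite X" "indep_set C X I"
  shows "\<exists>J. maximal_indep_set C X J \<and> I \<subseteq> J"
proof -
  let ?S = "{J. indep_set C X J \<and> I \<subseteq> J}"
  have "finite ?S" using assms(1) by (rule finite_subset[rotated, OF finite_Pow_iff[THEN iffD2]]) (auto simp: indep_set_def)
  moreover have "I \<in> ?S" using assms(2) by auto
  ultimately obtain J where "J \<in> ?S" "\<forall>b\<in>?S. J \<le> b \<longrightarrow> J = b"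
    using finite_has_maximal2[of ?S I] by auto
  then have J: "indep_set C X J" "I \<subseteq> J" "\<And>b. indep_set C X b \<Longrightarrow> J \<subseteq> b \<Longrightarrow> J = b"
    by auto
  have "maximal_indep_set C X J" unfolding maximal_indep_set_def
  proof (intro conjI allI impI)
    show "indep_set C X J" by (rule J(1))
    fix K assume "indep_set C X K \<and> J \<subseteq> K"
    then show "K = J" using J(3) by auto
  qed
  then show ?thesis using J(2) by auto
qed

lemma card_E_bound:
  assumes "is_dag V E"
  shows "2 * card E \<le> card V ^ 2"
proof -
  have fin: "finite V" "E \<subseteq> V \<times> V" "acyclic E" using assms unfolding is_dag_def by auto
  have disj: "E \<inter> E\<inverse> = {}"
  proof (rule ccontr)
    assume "E \<inter> E\<inverse> \<noteq> {}"
    then obtain a b where "(a,b) \<in> E" "(b,a) \<in> E" by auto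
    then have "(a,a) \<in> E\<^sup>+" by auto
    then show False using fin(3) unfolding acyclic_def by auto
  qed
  have fE: "finite E" using fin by (meson finite_SigmaI finite_subset)
  have "card (E \<union> E\<inverse>) = card E + card (E\<inverse>)"
    using disj fE by (intro card_Un_disjoint) auto
  also have "card (E\<inverse>) = card E" by (rule card_inverse)
  finally have "card (E \<union> E\<inverse>) = 2 * card E" by simp
  moreover have "card (E \<union> E\<inverse>) \<le> card (V \<times> V)"
    using fin by (intro card_mono) auto
  ultimately show ?thesis by (simp add: card_cartesian_product power2_eq_square)
qed

theorem lemma4p1:
  fixes M :: "nat \<Rightarrow> real" and bfs :: "nat \<Rightarrow> nat \<Rightarrow> real" and cB :: real
  assumes M_bound: "M \<in> O(\<lambda>k. real k powr 2.372)"
    and M_ge1: "\<forall>k. 1 \<le> M k"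
    and bfs_nonneg: "\<forall>n k. 0 \<le> bfs n k"
    and bfs_bound: "\<forall>n k. bfs n k \<le> cB * (real n + real k)"
  shows "\<exists>K1 K2 K3 :: real. \<forall>(V :: 'v set) E C s t L.
    is_dag V E \<longrightarrow> constraint_graph E C \<longrightarrow> s \<in> V \<longrightarrow> t \<in> V \<longrightarrow>
    output_sensitive_enum {I. maximal_indep_set C E I} (M (card E)) L \<longrightarrow>
      (alg_run s t L \<longleftrightarrow> dacc V E C s t) \<and>
      alg_time bfs (card V) s t L
        \<le> K1 * (real (card V) + real (card E)) * M (card E) * real (mu C E) \<and>
      (real (card V) + real (card E)) * M (card E) * real (mu C E)
        \<le> K2 * real (card V) powr 6.75 * real (mu C E) \<and>
      real (card V) powr 6.75 * real (mu C E) \<le> K3 * 1.45 ^ (card V ^ 2)"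
proof -
  obtain Cm where Cm: "Cm > 0" "\<forall>k. M k \<le> Cm * max 1 (real k powr 2.372)"
    using M_bound_lemma[OF M_bound] by blast
  obtain K where K: "\<forall>n::nat. real n powr 6.75 * sqrt 2 ^ (n^2) \<le> K * 1.45^(n^2)"
    using growth_lemma by blast
  show ?thesis
  proof (rule exI[of _ "1 + \<bar>cB\<bar>"], rule exI[of _ "2 * Cm"], rule exI[of _ K], intro allI impI)
    fix V :: "'v set" and E C s t L
    assume dag: "is_dag V E" and cg: "constraint_graph E C" and sV: "s \<in> V" and tV: "t \<in> V"
      and enum: "output_sensitive_enum {I. maximal_indep_set C E I} (M (card E)) L"
    define n where "n = card V"
    define m where "m = card E"
    define S where "S = {I. maximal_indep_set C E I}"
    have finV: "finite V" and EV: "E \<subseteq> V \<times> V" using dag unfolding is_dag_def by auto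
    have finE: "finite E" using finV EV by (meson finite_SigmaI finite_subset)
    have n1: "1 \<le> n" proof -
      have "card V \<noteq> 0" using finV sV by auto
      then show ?thesis unfolding n_def by simp
    qed
    have m2: "2 * m \<le> n^2" unfolding m_def n_def by (rule card_E_bound[OF dag])
    have L1: "distinct (map fst L)" "set (map fst L) = S" "\<forall>x\<in>set L. 0 \<le> snd x"
      "sum_list (map snd L) \<le> M m * real (length L)"
      using enum unfolding output_sensitive_enum_def S_def m_def by auto
    have muL: "mu C E = length L"
      unfolding mu_def S_def[symmetric] using distinct_card[OF L1(1)] L1(2) by simp
    have SE: "\<And>I. I \<in> S \<Longrightarrow> I \<subseteq> E"
      unfolding S_def maximal_indep_set_def indep_set_def by auto
    have Mm1: "1 \<le> M m" using M_ge1 by auto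
    have nreal: "1 \<le> real n" using n1 by simp
    have P1: "alg_run s t L \<longleftrightarrow> dacc V E C s t"
    proof
      assume "alg_run s t L"
      then obtain x where x: "x \<in> set L" "(s,t) \<in> (fst x)\<^sup>*" using alg_run_iff[of s t L] by auto
      have "fst x \<in> S" using x(1) L1(2) by auto
      then have "indep_set C E (fst x)" "fst x \<subseteq> E" unfolding S_def maximal_indep_set_def indep_set_def by auto
      then show "dacc V E C s t" unfolding dacc_def using x(2) by blast
    next
      assume "dacc V E C s t"
      then obtain E' where E': "E' \<subseteq> E" "indep_set C E E'" "(s,t) \<in> E'\<^sup>*" unfolding dacc_def by blast
      obtain J where J: "maximal_indep_set C E J" "E' \<subseteq> J" using extend_maximal[OF finE E'(2)] by blast
      then have "J \<in> set (map fst L)" using L1(2) unfolding S_def by auto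
      then obtain x where x: "x \<in> set L" "fst x = J" by auto
      have "(s,t) \<in> J\<^sup>*" using E'(3) J(2) rtrancl_mono by blast
      then show "alg_run s t L" using alg_run_iff[of s t L] x by auto
    qed
    have bfsB: "\<forall>x\<in>set L. bfs n (card (fst x)) \<le> \<bar>cB\<bar> * (real n + real m)"
    proof
      fix x assume "x \<in> set L"
      then have "fst x \<subseteq> E" using SE L1(2) by auto
      then have "card (fst x) \<le> m" unfolding m_def using finE card_mono by blast
      then have "bfs n (card (fst x)) \<le> cB * (real n + real (card (fst x)))" using bfs_bound by auto
      also have "\<dots> \<le> \<bar>cB\<bar> * (real n + real (card (fst x)))" by (intro mult_right_mono) auto
      also have "\<dots> \<le> \<bar>cB\<bar> * (real n + real m)" using \<open>card (fst x) \<le> m\<close> by (intro mult_left_mono) auto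
      finally show "bfs n (card (fst x)) \<le> \<bar>cB\<bar> * (real n + real m)" .
    qed
    have "alg_time bfs n s t L \<le> sum_list (map snd L) + real (length L) * (\<bar>cB\<bar> * (real n + real m))"
      by (rule alg_time_le) (use L1(3) bfsB in auto)
    also have "\<dots> \<le> M m * real (length L) + real (length L) * (\<bar>cB\<bar> * (real n + real m))"
      using L1(4) by simp
    also have "\<dots> \<le> (1 + \<bar>cB\<bar>) * (real n + real m) * M m * real (length L)"
    proof -
      have a: "M m * real (length L) \<le> (real n + real m) * (M m * real (length L))"
        using mult_right_mono[of 1 "real n + real m" "M m * real (length L)"] nreal Mm1 by simp
      have b: "real (length L) * (\<bar>cB\<bar> * (real n + real m)) \<le> (\<bar>cB\<bar> * (real n + real m) * real (length L)) * M m"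
        using mult_left_mono[of 1 "M m" "\<bar>cB\<bar> * (real n + real m) * real (length L)"] Mm1 by (simp add: mult.commute)
      show ?thesis using a b by (simp add: algebra_simps)
    qed
    finally have P2: "alg_time bfs n s t L \<le> (1 + \<bar>cB\<bar>) * (real n + real m) * M m * real (mu C E)"
      using muL by simp
    have nm: "real n + real m \<le> 2 * real n powr 2"
    proof -
      have "real n * 1 \<le> real n * real n" using nreal by (intro mult_left_mono) auto
      then have "real n \<le> real n ^ 2" by (simp add: power2_eq_square)
      moreover have "2 * real m \<le> real n ^ 2" proof -
        have "real (2 * m) \<le> real (n^2)" using m2 by (simp only: of_nat_le_iff)
        then show ?thesis by simp
      qed
      moreover have "real n powr 2 = real n ^ 2" using nreal by (simp add: powr_realpow)
      ultimately show ?thesis by linarith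
    qed
    have Mb: "M m \<le> Cm * real n powr 4.744"
    proof -
      have "real m \<le> real n ^ 2" proof -
        have "m \<le> n^2" using m2 by linarith
        then have "real m \<le> real (n^2)" by (simp only: of_nat_le_iff)
        then show ?thesis by simp
      qed
      then have "real m powr 2.372 \<le> (real n ^ 2) powr 2.372" by (intro powr_mono2) auto
      also have "\<dots> = (real n powr 2) powr 2.372" using nreal by (simp add: powr_realpow)
      also have "\<dots> = real n powr (2 * 2.372)" by (rule powr_powr)
      also have "(2 * 2.372::real) = 4.744" by simp
      finally have "max 1 (real m powr 2.372) \<le> real n powr 4.744"
        using nreal ge_one_powr_ge_zero[of "real n" "4.744"] by auto
      then show ?thesis using Cm by (meson mult_left_mono less_imp_le order_trans)
    qed
    have pe: "real n powr 2 * real n powr 4.744 = real n powr 6.744"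
      using powr_add[of "real n" 2 "4.744", symmetric] by simp
    have "(real n + real m) * M m \<le> (2 * real n powr 2) * (Cm * real n powr 4.744)"
      using nm Mb Mm1 by (intro mult_mono) auto
    also have "\<dots> = 2 * Cm * real n powr 6.744" unfolding pe[symmetric] by (simp add: algebra_simps)
    also have "\<dots> \<le> 2 * Cm * real n powr 6.75"
      using nreal Cm by (intro mult_left_mono[OF powr_mono]) auto
    finally have P3: "(real n + real m) * M m * real (mu C E) \<le> 2 * Cm * real n powr 6.75 * real (mu C E)"
      by (intro mult_right_mono) auto
    have "mu C E \<le> 2 ^ m"
    proof -
      have "S \<subseteq> Pow E" using SE by auto
      then have "card S \<le> card (Pow E)" using finE by (intro card_mono) auto
      then show ?thesis unfolding mu_def S_def m_def using card_Pow[of E] finE by simp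
    qed
    then have "real (mu C E) \<le> sqrt 2 ^ (2 * m)"
      by (simp add: power_mult)
    also have "\<dots> \<le> sqrt 2 ^ (n^2)" using m2 by (intro power_increasing) auto
    finally have "real n powr 6.75 * real (mu C E) \<le> real n powr 6.75 * sqrt 2 ^ (n^2)"
      by (intro mult_left_mono) auto
    also have "\<dots> \<le> K * 1.45^(n^2)" using K by blast
    finally have P4: "real n powr 6.75 * real (mu C E) \<le> K * 1.45^(n^2)" .
    show "(alg_run s t L \<longleftrightarrow> dacc V E C s t) \<and>
      alg_time bfs (card V) s t L
        \<le> (1 + \<bar>cB\<bar>) * (real (card V) + real (card E)) * M (card E) * real (mu C E) \<and>
      (real (card V) + real (card E)) * M (card E) * real (mu C E)
        \<le> 2 * Cm * real (card V) powr 6.75 * real (mu C E) \<and>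
      real (card V) powr 6.75 * real (mu C E) \<le> K * 1.45 ^ (card V ^ 2)"
      using P1 P2 P3 P4 unfolding n_def m_def by (simp only:)
  qed
qed

end
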